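(* Suppose the support of $F$ is $\{\underline{\theta},\overline{\theta}\}$. Then the unique robustly optimal test-fee structure has testing fee $\phi_t^*=0$, disclosure fee $\phi_d^*=\overline{\theta}-\mu$, and score distribution $G^*(s)=e^{(\underline{\theta}-\mu)/(\overline{\theta}-\mu)}$ for $s\in[\underline{\theta},\underline{\theta}+\overline{\theta}-\mu)$ and $G^*(s)=e^{(s-\overline{\theta})/(\overline{\theta}-\mu)}$ for $s\in[\underline{\theta}+\overline{\theta}-\mu,\overline{\theta}]$.
   Context: $F$ is a distribution of the asset value with lowest and highest support points $0\le\underline{\theta}<\overline{\theta}<\infty$ and mean $\mu$. $\Gamma(F)$ is the set of CDFs $G$ supported in $[\underline{\theta},\overline{\theta}]$ with $\int_{\underline{\theta}}^{x}G\le\int_{\underline{\theta}}^{x}F$ for all $x$ and equality at $x=\overline{\theta}$ (score distributions of unbiased tests). A test-fee structure is $(G,\phi)$ with $G\in\Gamma(F)$, $\phi=(\phi_t,\phi_d)\in\mathbb{R}^2$ (testing fee, disclosure fee); in the induced game an uninformed agent may pay $\phi_t$ to observe a score $s\sim G$ and then pay $\phi_d$ to verifiably disclose it to a competitive market which otherwise sees a null message. Define $\hat R(G,\phi,\tau)=\phi_t+\phi_d(1-G(\tau))$; (w-P): $\phi_t\le\int_{\mu+\phi_d}^{\overline{\theta}}[s-(\mu+\phi_d)]dG(s)$; (w-HE): $\tau-\phi_d=E_G[s\mid s\le\tau]$ and $\tau'-\phi_d\ge E_G[s\mid s\le\tau']$ for all $\tau'>\tau$. A test-fee structure $(G,\phi)$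 is robustly optimal if for some $\tau$, $(G,\phi,\tau)$ maximizes $\hat R$ over all $(G,\phi,\tau)\in\Gamma(F)\times\mathbb{R}^3$ satisfying (w-P) and (w-HE). *)

theory Defs
  imports "HOL-Analysis.Analysis"
begin

definition cdf_on :: "real \<Rightarrow> real \<Rightarrow> (real \<Rightarrow> real) \<Rightarrow> bool" where
  "cdf_on lo hi G \<longleftrightarrow> mono G \<and> (\<forall>x. continuous (at_right x) G)
     \<and> (\<forall>x. x < lo \<longrightarrow> G x = 0) \<and> (\<forall>x. hi \<le> x \<longrightarrow> G x = 1)"

definition cdf_mean :: "(real \<Rightarrow> real) \<Rightarrow> real" where
  "cdf_mean F = (LINT x|interval_measure F. x)"

text \<open>Gamma(F): score distributions of unbiased tests.\<close>
definition Gamma :: "real \<Rightarrow> real \<Rightarrow> (real \<Rightarrow> real) \<Rightarrow> (real \<Rightarrow> real) \<Rightarrow> bool" where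
  "Gamma lo hi F G \<longleftrightarrow> cdf_on lo hi G
     \<and> (\<forall>x. integral {lo..x} G \<le> integral {lo..x} F)
     \<and> integral {lo..hi} G = integral {lo..hi} F"

definition Rhat :: "(real \<Rightarrow> real) \<Rightarrow> real \<Rightarrow> real \<Rightarrow> real \<Rightarrow> real" where
  "Rhat G phi_t phi_d tau = phi_t + phi_d * (1 - G tau)"

text \<open>(w-P): the Stieltjes integral from mu+phi_d to hi of (s - (mu+phi_d)) dG(s).
  The integrand vanishes at s = mu+phi_d, so open/closed endpoint is immaterial.\<close>
definition wP :: "real \<Rightarrow> real \<Rightarrow> (real \<Rightarrow> real) \<Rightarrow> real \<Rightarrow> real \<Rightarrow> bool" where
  "wP hi mu G phi_t phi_d \<longleftrightarrow>
     phi_t \<le> (LINT s:{mu + phi_d<..hi}|interval_measure G. s - (mu + phi_d))"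

text \<open>E_G[s | s \<le> tau] (meaningful when G tau > 0).\<close>
definition cond_exp_below :: "(real \<Rightarrow> real) \<Rightarrow> real \<Rightarrow> real" where
  "cond_exp_below G tau = (LINT s:{..tau}|interval_measure G. s) / G tau"

text \<open>(w-HE); the equation requires the conditional expectation to be defined, i.e. G tau > 0.\<close>
definition wHE :: "(real \<Rightarrow> real) \<Rightarrow> real \<Rightarrow> real \<Rightarrow> bool" where
  "wHE G phi_d tau \<longleftrightarrow> G tau > 0 \<and> tau - phi_d = cond_exp_below G tau
     \<and> (\<forall>tau'. tau' > tau \<longrightarrow> tau' - phi_d \<ge> cond_exp_below G tau')"

definition feasible :: "real \<Rightarrow> real \<Rightarrow> real \<Rightarrow> (real \<Rightarrow> real) \<Rightarrow> (real \<Rightarrow> real)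
    \<Rightarrow> real \<Rightarrow> real \<Rightarrow> real \<Rightarrow> bool" where
  "feasible lo hi mu F G phi_t phi_d tau \<longleftrightarrow>
     Gamma lo hi F G \<and> wP hi mu G phi_t phi_d \<and> wHE G phi_d tau"

definition robustly_optimal :: "real \<Rightarrow> real \<Rightarrow> real \<Rightarrow> (real \<Rightarrow> real) \<Rightarrow> (real \<Rightarrow> real)
    \<Rightarrow> real \<Rightarrow> real \<Rightarrow> bool" where
  "robustly_optimal lo hi mu F G phi_t phi_d \<longleftrightarrow>
     (\<exists>tau. feasible lo hi mu F G phi_t phi_d tau \<and>
        (\<forall>G' phi_t' phi_d' tau'. feasible lo hi mu F G' phi_t' phi_d' tau' \<longrightarrow>
            Rhat G' phi_t' phi_d' tau' \<le> Rhat G phi_t phi_d tau))"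

definition Gstar :: "real \<Rightarrow> real \<Rightarrow> real \<Rightarrow> real \<Rightarrow> real" where
  "Gstar lo hi mu s =
     (if s < lo then 0
      else if s < lo + hi - mu then exp ((lo - mu) / (hi - mu))
      else if s \<le> hi then exp ((s - hi) / (hi - mu))
      else 1)"

end

theory Submission
  imports Defs "HOL-Probability.Probability"
begin

lemma stieltjes_core:
  fixes G :: "real \<Rightarrow> real"
  assumes mono: "mono G" and rc: "\<And>x. continuous (at_right x) G" and ab: "a \<le> b"
  shows "(\<integral>\<^sup>+ s. ennreal (indicator {a<..b} s * (s - a)) \<partial>interval_measure G)
         = ennreal (integral {a..b} (\<lambda>t. G b - G t))"
proof -
  let ?M = "interval_measure G"
  have monoG: "\<And>x y. x \<le> y \<Longrightarrow> G x \<le> G y" using mono by (auto simp: mono_def)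
  interpret M: sigma_finite_measure ?M
    by (rule sigma_finite_interval_measure[OF monoG rc])
  interpret P: pair_sigma_finite ?M lborel ..
  define S where "S = {x. a < snd x \<and> snd x < fst x \<and> fst x \<le> (b::real)}"
  have "Measurable.pred (?M \<Otimes>\<^sub>M lborel) (\<lambda>x. a < snd x \<and> snd x < fst x \<and> fst x \<le> (b::real))"
    by measurable
  then have Smeas: "S \<in> sets (?M \<Otimes>\<^sub>M lborel)"
    unfolding S_def pred_def by (simp add: space_pair_measure)
  have meas: "(\<lambda>(s,t). indicator S (s,t) :: ennreal) \<in> borel_measurable (?M \<Otimes>\<^sub>M lborel)"
    using Smeas by simp
  have inner1: "(\<integral>\<^sup>+ t. indicator S (s,t) \<partial>lborel) = ennreal (indicator {a<..b} s * (s - a))" for s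
  proof -
    have "(\<lambda>t. indicator S (s,t) :: ennreal) = indicator (if a < s \<and> s \<le> b then {a<..<s} else {})"
      by (auto simp: S_def indicator_def fun_eq_iff)
    then show ?thesis by (simp add: indicator_def)
  qed
  have inner2: "(\<integral>\<^sup>+ s. indicator S (s,t) \<partial>?M) = ennreal (indicator {a<..<b} t * (G b - G t))" for t
  proof -
    have "(\<lambda>s. indicator S (s,t) :: ennreal) = indicator (if a < t then {t<..b} else {})"
      by (auto simp: S_def indicator_def fun_eq_iff)
    then show ?thesis
      using emeasure_interval_measure_Ioc_eq[OF monoG rc, of t b]
      by (simp add: indicator_def)
  qed
  have "(\<integral>\<^sup>+ s. ennreal (indicator {a<..b} s * (s - a)) \<partial>?M)
      = (\<integral>\<^sup>+ s. (\<integral>\<^sup>+ t. indicator S (s,t) \<partial>lborel) \<partial>?M)"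
    by (simp add: inner1)
  also have "\<dots> = (\<integral>\<^sup>+ t. (\<integral>\<^sup>+ s. indicator S (s,t) \<partial>?M) \<partial>lborel)"
    using P.Fubini'[of "\<lambda>s t. indicator S (s,t)"] meas by simp
  also have "\<dots> = (\<integral>\<^sup>+ t. ennreal (indicator {a<..<b} t * (G b - G t)) \<partial>lborel)"
    by (simp add: inner2)
  also have "\<dots> = ennreal (integral {a..b} (\<lambda>t. G b - G t))"
  proof -
    have int: "(\<lambda>t. G b - G t) integrable_on {a..b}"
      using integrable_on_mono_on[of a b G] mono
      by (intro integrable_diff integrable_const_ivl) (auto simp: mono_on_def mono_def)
    have "((\<lambda>t. G b - G t) has_integral integral {a..b} (\<lambda>t. G b - G t)) {a<..<b}"
      using has_integral_open_interval[of "\<lambda>t. G b - G t" _ a b] int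
      by (simp add: has_integral_integral)
    then have "integral\<^sup>N lborel (\<lambda>x. indicator {a<..<b} x * (G b - G x)) = integral {a..b} (\<lambda>t. G b - G t)"
      by (intro nn_integral_has_integral_lebesgue) (auto simp: monoG)
    then show ?thesis by simp
  qed
  finally show ?thesis .
qed

lemma dini_eps:
  fixes f :: "real \<Rightarrow> real"
  assumes ab: "a \<le> b" and cont: "continuous_on {a..b} f" and e: "0 < e"
  and der: "\<And>y. a \<le> y \<Longrightarrow> y < b \<Longrightarrow> \<exists>D. (f has_real_derivative D) (at y within {y..b}) \<and> D \<le> 0"
  shows "f b \<le> f a + e * (b - a)"
proof -
  define g where "g y = f y - e * (y - a)" for y
  define S where "S = {a..b} \<inter> g -` {..f a}"
  have contg: "continuous_on {a..b} g" unfolding g_def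
    by (intro continuous_intros cont)
  have closed: "closed S" unfolding S_def
    by (rule continuous_closed_preimage[OF contg]) auto
  have aS: "a \<in> S" using ab by (auto simp: S_def g_def)
  have bdd: "bdd_above S" by (auto simp: S_def bdd_above_def)
  define s where "s = Sup S"
  have sS: "s \<in> S" unfolding s_def using closed_contains_Sup[OF _ bdd closed] aS by auto
  have sup: "z \<in> S \<Longrightarrow> z \<le> s" for z unfolding s_def using bdd by (simp add: cSup_upper)
  have "s = b"
  proof (rule ccontr)
    assume "s \<noteq> b"
    with sS have sb: "a \<le> s" "s < b" by (auto simp: S_def)
    from der[OF sb] obtain D where D: "(f has_real_derivative D) (at s within {s..b})" "D \<le> 0" by blast
    have "((\<lambda>y. (f y - f s) / (y - s)) \<longlongrightarrow> D) (at s within {s..b})"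
      using D(1) by (simp add: has_field_derivative_iff)
    then have "\<forall>\<^sub>F y in at s within {s..b}. (f y - f s) / (y - s) < D + e"
      using e by (intro order_tendstoD(2)) auto
    then obtain \<delta> where \<delta>: "\<delta> > 0" "\<And>y. y \<in> {s..b} \<Longrightarrow> y \<noteq> s \<Longrightarrow> dist y s < \<delta> \<Longrightarrow> (f y - f s) / (y - s) < D + e"
      unfolding eventually_at by blast
    define z where "z = min b (s + \<delta>/2)"
    have z: "s < z" "z \<le> b" "dist z s < \<delta>" using sb \<delta>(1) by (auto simp: z_def dist_real_def)
    have "(f z - f s) / (z - s) < D + e" using \<delta>(2)[of z] z by auto
    then have "f z - f s < (D + e) * (z - s)" using z by (simp add: divide_less_eq)
    also have "\<dots> \<le> e * (z - s)" using D(2) z by (intro mult_right_mono) auto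
    finally have "f z < f s + e * (z - s)" by simp
    moreover have "f s \<le> f a + e * (s - a)" using sS by (auto simp: S_def g_def)
    ultimately have "z \<in> S" using z sb by (auto simp: S_def g_def algebra_simps)
    then show False using sup z by force
  qed
  then show ?thesis using sS by (auto simp: S_def g_def)
qed

lemma dini_antimono:
  fixes f :: "real \<Rightarrow> real"
  assumes ab: "a \<le> b" and cont: "continuous_on {a..b} f"
  and der: "\<And>y. a \<le> y \<Longrightarrow> y < b \<Longrightarrow> \<exists>D. (f has_real_derivative D) (at y within {y..b}) \<and> D \<le> 0"
  shows "f b \<le> f a"
proof (rule ccontr)
  assume "\<not> f b \<le> f a"
  then have lt: "f a < f b" by simp
  show False
  proof (cases "a = b")
    case True then show False using lt by simp
  next
    case False
    then have ab': "a < b" using ab by simp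
    define e where "e = (f b - f a) / (2 * (b - a))"
    have e: "0 < e" using lt ab' by (simp add: e_def)
    have "f b \<le> f a + e * (b - a)" by (rule dini_eps[OF ab cont e der])
    also have "e * (b - a) = (f b - f a) / 2" using ab' by (simp add: e_def field_simps)
    finally have "f b \<le> f a + (f b - f a) / 2" .
    then show False using lt by (simp add: field_simps)
  qed
qed


locale cdfl =
  fixes lo hi :: real and G :: "real \<Rightarrow> real"
  assumes cdf: "cdf_on lo hi G" and lohi: "lo < hi"
begin

lemma monoG: "x \<le> y \<Longrightarrow> G x \<le> G y"
  using cdf by (auto simp: cdf_on_def mono_def)
lemma mono': "mono G" using cdf by (auto simp: cdf_on_def)
lemma rc: "continuous (at_right x) G"
  using cdf by (auto simp: cdf_on_def)
lemma G_below: "x < lo \<Longrightarrow> G x = 0"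
  using cdf by (auto simp: cdf_on_def)
lemma G_above: "hi \<le> x \<Longrightarrow> G x = 1"
  using cdf by (auto simp: cdf_on_def)
lemma G_nonneg: "0 \<le> G x"
proof -
  have "G (min x (lo - 1)) \<le> G x" by (rule monoG) auto
  moreover have "G (min x (lo - 1)) = 0" by (rule G_below) auto
  ultimately show ?thesis by simp
qed
lemma G_le1: "G x \<le> 1"
proof -
  have "G x \<le> G (max x hi)" by (rule monoG) auto
  moreover have "G (max x hi) = 1" by (rule G_above) auto
  ultimately show ?thesis by simp
qed

lemma lim_bot: "(G \<longlongrightarrow> 0) at_bot"
proof (rule tendsto_eventually)
  show "\<forall>\<^sub>F x in at_bot. G x = 0"
    unfolding eventually_at_bot_dense using G_below by blast
qed
lemma lim_top: "(G \<longlongrightarrow> 1) at_top"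
proof (rule tendsto_eventually)
  show "\<forall>\<^sub>F x in at_top. G x = 1"
    unfolding eventually_at_top_linorder using G_above by blast
qed

lemma rd: "real_distribution (interval_measure G)"
  by (rule real_distribution_interval_measure[OF monoG rc lim_bot lim_top])

sublocale M: prob_space "interval_measure G"
  using rd by (simp add: real_distribution_def)

lemma meas_Iic: "measure (interval_measure G) {..x} = G x"
  by (rule measure_interval_measure_Iic[OF monoG rc lim_bot])
lemma emeas_Iic: "emeasure (interval_measure G) {..x} = G x"
  by (rule emeasure_interval_measure_Iic[OF monoG rc lim_bot])
lemma meas_Ioc: "x \<le> y \<Longrightarrow> measure (interval_measure G) {x<..y} = G y - G x"
  by (rule measure_interval_measure_Ioc[OF _ monoG rc])

lemma intG: "G integrable_on {a..b}"
  using integrable_on_mono_on[of a b G] mono' by (auto simp: mono_on_def mono_def)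

lemma core_lint:
  assumes "a \<le> b"
  shows "(LINT s|interval_measure G. indicator {a<..b} s * (s - a)) = integral {a..b} (\<lambda>t. G b - G t)"
    and "integrable (interval_measure G) (\<lambda>s. indicator {a<..b} s * (s - a))"
proof -
  let ?f = "\<lambda>s. indicator {a<..b} s * (s - a) :: real"
  show int: "integrable (interval_measure G) ?f"
  proof (rule M.integrable_const_bound[where B="b - a"])
    show "AE x in interval_measure G. norm (?f x) \<le> b - a"
      using assms by (intro AE_I2) (auto simp: indicator_def)
  qed simp
  have nn: "AE x in interval_measure G. 0 \<le> ?f x"
    by (intro AE_I2) (auto simp: indicator_def)
  have "ennreal (LINT s|interval_measure G. ?f s) = ennreal (integral {a..b} (\<lambda>t. G b - G t))"
    using nn_integral_eq_integral[OF int nn, symmetric] stieltjes_core[OF mono' rc assms]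
    by simp
  moreover have "0 \<le> (LINT s|interval_measure G. ?f s)"
    by (rule integral_nonneg_AE[OF nn])
  moreover have "0 \<le> integral {a..b} (\<lambda>t. G b - G t)"
    using assms intG
    by (intro integral_nonneg) (auto intro!: integrable_diff integrable_const_ivl simp: monoG)
  ultimately show "(LINT s|interval_measure G. ?f s) = integral {a..b} (\<lambda>t. G b - G t)"
    by simp
qed

abbreviation "H x \<equiv> integral {lo..x} G"

lemma int_split: "a \<le> c \<Longrightarrow> c \<le> b \<Longrightarrow> integral {a..b} G = integral {a..c} G + integral {c..b} G"
  using Henstock_Kurzweil_Integration.integral_combine[OF _ _ intG] by simp

lemma int_lower: "x \<le> y \<Longrightarrow> (y - x) * G x \<le> integral {x..y} G"
proof -
  assume "x \<le> y"
  have "integral {x..y} (\<lambda>_. G x) \<le> integral {x..y} G"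
    by (rule integral_le) (auto intro: intG monoG)
  then show ?thesis using \<open>x \<le> y\<close> by simp
qed
lemma int_upper: "x \<le> y \<Longrightarrow> integral {x..y} G \<le> (y - x) * G y"
proof -
  assume "x \<le> y"
  have "integral {x..y} G \<le> integral {x..y} (\<lambda>_. G y)"
    by (rule integral_le) (auto intro: intG monoG)
  then show ?thesis using \<open>x \<le> y\<close> by simp
qed
lemma int_nonneg: "0 \<le> integral {x..y} G"
  by (rule integral_nonneg) (auto intro: intG G_nonneg)

lemma H_above: "hi \<le> x \<Longrightarrow> H x = H hi + (x - hi)"
proof -
  assume "hi \<le> x"
  have "integral {hi..x} G = integral {hi..x} (\<lambda>_. 1::real)"
    by (rule integral_cong) (auto intro: G_above)
  then show ?thesis using int_split[of lo hi x] \<open>hi \<le> x\<close> lohi by simp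
qed

lemma int_zero_below: "a \<le> lo \<Longrightarrow> integral {a..lo} G = 0"
proof -
  assume "a \<le> lo"
  have "integral {a..lo} G = integral {a..lo} (\<lambda>_. 0::real)"
    by (rule integral_spike[of "{lo}"]) (auto intro: G_below)
  then show ?thesis by simp
qed

lemma AE_gt: "AE s in interval_measure G. a < s" if "a < lo"
proof (rule AE_I')
  show "{..a} \<in> null_sets (interval_measure G)"
    using emeas_Iic[of a] G_below[OF that] by (simp add: null_sets_def)
qed auto

lemma AE_le: "AE s in interval_measure G. s \<le> hi"
proof (rule AE_I')
  have "measure (interval_measure G) (UNIV - {..hi}) = 0"
    using M.prob_compl[of "{..hi}"] meas_Iic[of hi] G_above[of hi] by simp
  then show "UNIV - {..hi} \<in> null_sets (interval_measure G)"
    by (simp add: M.emeasure_eq_measure null_sets_def)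
qed auto

lemma lint_Iic:
  assumes "lo \<le> t"
  shows "(LINT s:{..t}|interval_measure G. s) = t * G t - H t"
proof -
  define a where "a = lo - 1"
  have a: "a < lo" "a \<le> t" using assms by (auto simp: a_def)
  have "(LINT s:{..t}|interval_measure G. s)
     = (LINT s|interval_measure G. indicator {a<..t} s * (s - a) + a * indicator {a<..t} s)"
    unfolding set_lebesgue_integral_def
    by (rule integral_cong_AE) (use AE_gt[OF a(1)] in \<open>auto elim!: AE_mp simp: indicator_def\<close>)
  also have "\<dots> = (LINT s|interval_measure G. indicator {a<..t} s * (s - a))
       + a * measure (interval_measure G) {a<..t}"
  proof -
    have i2: "integrable (interval_measure G) (\<lambda>s. a * indicator {a<..t} s)"
      by (intro integrable_mult_right integrable_real_indicator) (auto simp: M.emeasure_eq_measure)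
    show ?thesis
      using Bochner_Integration.integral_add[OF core_lint(2)[OF a(2)] i2]
      by (simp add: M.emeasure_eq_measure)
  qed
  also have "\<dots> = integral {a..t} (\<lambda>x. G t - G x) + a * G t"
    using core_lint(1)[OF a(2)] meas_Ioc[OF a(2)] G_below[OF a(1)] by simp
  also have "integral {a..t} (\<lambda>x. G t - G x) = (t - a) * G t - integral {a..t} G"
    using a by (subst integral_diff) (auto intro: intG)
  also have "integral {a..t} G = H t"
    using int_split[of a lo t] int_zero_below[of a] a assms by simp
  finally show ?thesis by (simp add: algebra_simps)
qed

lemma lint_wP:
  assumes "lo \<le> c" "c \<le> hi"
  shows "(LINT s:{c<..hi}|interval_measure G. s - c) = hi - c - H hi + H c"
proof -
  have "(LINT s:{c<..hi}|interval_measure G. s - c) = integral {c..hi} (\<lambda>x. G hi - G x)"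
    using core_lint(1)[OF assms(2)] by (simp add: set_lebesgue_integral_def)
  also have "\<dots> = (hi - c) - integral {c..hi} G"
    using assms G_above[of hi] by (subst integral_diff) (auto intro: intG)
  finally show ?thesis using int_split[of lo c hi] assms by simp
qed

lemma mean: "(LINT s|interval_measure G. s) = hi - H hi"
proof -
  have "(LINT s|interval_measure G. s) = (LINT s:{..hi}|interval_measure G. s)"
    unfolding set_lebesgue_integral_def
    by (rule integral_cong_AE) (use AE_le in \<open>auto elim!: AE_mp simp: indicator_def\<close>)
  then show ?thesis using lint_Iic[of hi] lohi G_above[of hi] by simp
qed

lemma H_rderiv:
  assumes "lo \<le> x" "x < y"
  shows "((\<lambda>u. H u) has_real_derivative G x) (at x within {x..y})"
proof -
  have cont: "continuous (at x within {x..y}) G"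
    using rc[of x] at_within_Icc_at_right[OF assms(2)] by (simp add: continuous_def)
  have "((\<lambda>u. integral {x..u} G) has_vector_derivative G x) (at x within {x..y})"
    using integral_has_vector_derivative_continuous_at[of G x y x "{}"] intG cont assms by simp
  then have "((\<lambda>u. integral {x..u} G) has_real_derivative G x) (at x within {x..y})"
    by (simp add: has_real_derivative_iff_has_vector_derivative)
  then have "((\<lambda>u. H x + integral {x..u} G) has_real_derivative 0 + G x) (at x within {x..y})"
    by (intro DERIV_add DERIV_const)
  then have "((\<lambda>u. H x + integral {x..u} G) has_real_derivative G x) (at x within {x..y})"
    by simp
  then show ?thesis
  proof (rule has_field_derivative_transform_within[where d=1])
    fix u assume "u \<in> {x..y}"
    then show "H x + integral {x..u} G = H u" using int_split[of lo x u] assms by simp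
  qed (use assms in auto)
qed

lemma H_cont: "continuous_on {a..b} (\<lambda>u. H u)" if "lo \<le> a"
proof -
  have "continuous_on {lo..max b lo} (\<lambda>u. H u)"
    by (rule indefinite_integral_continuous_1[OF intG])
  then show ?thesis by (rule continuous_on_subset) (use that in auto)
qed

lemma k_antimono:
  assumes "lo \<le> t" "0 < phi" and le: "\<And>y. t \<le> y \<Longrightarrow> y \<le> b \<Longrightarrow> phi * G y \<le> H y"
    and "t \<le> x" "x \<le> y" "y \<le> b"
  shows "H y * exp (-(y - t) / phi) \<le> H x * exp (-(x - t) / phi)"
proof (rule dini_antimono[OF assms(5)])
  show "continuous_on {x..y} (\<lambda>u. H u * exp (- (u - t) / phi))"
  proof -
    have c1: "continuous_on {x..y} (\<lambda>u. H u)" by (rule H_cont) (use assms in linarith)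
    have c2: "continuous_on {x..y} (\<lambda>u. exp (-(u - t)/phi))" by (intro continuous_intros) (use assms(2) in auto)
    show ?thesis by (rule continuous_on_mult[OF c1 c2])
  qed
  fix z assume z: "x \<le> z" "z < y"
  let ?E = "exp (- (z - t) / phi)"
  have h1: "((\<lambda>u. H u) has_real_derivative G z) (at z within {z..y})"
    by (rule H_rderiv) (use assms z in linarith)+
  have pn: "phi \<noteq> 0" using assms(2) by simp
  have h2: "((\<lambda>u. exp (- (u - t) / phi)) has_real_derivative (?E * (- 1 / phi))) (at z within {z..y})"
    using pn apply -
    apply (rule derivative_eq_intros refl | assumption)+
    apply (simp add: divide_simps)
    done
  have "((\<lambda>u. H u * exp (- (u - t) / phi)) has_real_derivative
          (G z * ?E + (?E * (- 1 / phi)) * H z)) (at z within {z..y})"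
    by (rule DERIV_mult[OF h1 h2])
  moreover have "G z * ?E + (?E * (- 1 / phi)) * H z \<le> 0"
  proof -
    have "phi * G z \<le> H z" by (rule le) (use assms z in linarith)+
    then have "G z - H z / phi \<le> 0" using assms by (simp add: field_simps)
    then have "?E * (G z - H z / phi) \<le> 0" by (simp add: mult_nonneg_nonpos)
    then show ?thesis by (simp add: algebra_simps)
  qed
  ultimately show "\<exists>D. ((\<lambda>u. H u * exp (- (u - t) / phi)) has_real_derivative D) (at z within {z..y}) \<and> D \<le> 0"
    by blast
qed


end


lemma exp_inv_gt2: "0 < z \<Longrightarrow> 2 < exp z + inverse (exp z)" for z :: real
proof -
  assume z: "0 < z"
  have e1: "1 < exp z" using z by simp
  have "0 < (exp z - 1)^2" using e1 by simp
  then have "2 * exp z < exp z * exp z + 1" by (simp add: power2_eq_square algebra_simps)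
  then show ?thesis by (simp add: field_simps)
qed

lemma sinh_gt: "0 < y \<Longrightarrow> 2 * y < exp y - exp (- y)" for y :: real
proof -
  assume y: "0 < y"
  define h where "h z = exp z - inverse (exp z) - 2 * z" for z :: real
  have "h 0 \<le> h (y/2)"
  proof (rule DERIV_nonneg_imp_nondecreasing[of 0 "y/2" h])
    show "0 \<le> y/2" using y by simp
    fix x :: real
    have "DERIV h x :> exp x + inverse (exp x) - 2"
      unfolding h_def
      apply (rule derivative_eq_intros refl exp_not_eq_zero)+
      apply (simp add: field_simps)
      done
    then show "\<exists>D. DERIV h x :> D \<and> 0 \<le> D" using exp_plus_inverse_exp[of x] by auto
  qed
  moreover have "h (y/2) < h y"
  proof (rule DERIV_pos_imp_increasing[of "y/2" y h])
    show "y/2 < y" using y by simp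
    fix x assume x: "y/2 \<le> x" "x \<le> y"
    then have "0 < x" using y by simp
    have "DERIV h x :> exp x + inverse (exp x) - 2"
      unfolding h_def
      apply (rule derivative_eq_intros refl exp_not_eq_zero)+
      apply (simp add: field_simps)
      done
    then show "\<exists>D. DERIV h x :> D \<and> 0 < D" using exp_inv_gt2[OF \<open>0 < x\<close>] by auto
  qed
  ultimately have "0 < h y" by (simp add: h_def)
  then show ?thesis by (simp add: h_def exp_minus)
qed

lemma sq_lt: "0 < x \<Longrightarrow> x^2 * exp x < (exp x - 1)^2" for x :: real
proof -
  assume x: "0 < x"
  define y where "y = x / 2"
  have y: "0 < y" using x by (simp add: y_def)
  have ex: "exp x = exp y * exp y" by (simp add: y_def exp_add[symmetric])
  have em: "exp y * exp (- y) = 1" by (simp add: exp_minus)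
  have "exp x - 1 = exp y * (exp y - exp (- y))" using ex em by (simp add: algebra_simps)
  then have "(exp x - 1)^2 = exp x * (exp y - exp (- y))^2" using ex by (simp add: power2_eq_square algebra_simps)
  moreover have "x^2 < (exp y - exp (- y))^2"
  proof -
    have "x < exp y - exp (- y)" using sinh_gt[OF y] by (simp add: y_def)
    then show ?thesis using x by (simp add: power_strict_mono)
  qed
  ultimately show ?thesis by simp
qed

lemma psi_dec:
  fixes u v :: real
  assumes v: "0 < v" and vu: "v < u"
  shows "1 / u - 1 / (exp u - 1) < 1 / v - 1 / (exp v - 1)"
proof -
  define f where "f x = 1 / x - 1 / (exp x - 1)" for x :: real
  have "f u < f v"
  proof (rule DERIV_neg_imp_decreasing[of v u f, OF vu])
    fix x assume x: "v \<le> x" "x \<le> u"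
    then have x0: "0 < x" using v by simp
    have e1: "exp x - 1 \<noteq> 0" using x0 by simp
    have x1: "x \<noteq> 0" using x0 by simp
    have "DERIV f x :> (- 1 / x^2 + exp x / (exp x - 1)^2)"
      unfolding f_def
      apply (rule derivative_eq_intros refl e1 x1)+
      apply (simp add: field_simps power2_eq_square e1 x1)
      done
    moreover have "- 1 / x^2 + exp x / (exp x - 1)^2 < 0"
    proof -
      have p1: "0 < x^2" using x0 by simp
      have p2: "0 < (exp x - 1)^2" using e1 by simp
      have "exp x / (exp x - 1)^2 < 1 / x^2"
        using sq_lt[OF x0] p1 p2 by (simp add: divide_simps mult.commute)
      then show ?thesis by simp
    qed
    ultimately show "\<exists>y. DERIV f x :> y \<and> y < 0" by blast
  qed
  then show ?thesis by (simp add: f_def)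
qed


lemma alg:
  fixes A d phi E q X D :: real
  assumes A0: "0 < A" and ph: "0 < phi" and phd: "phi < d" and E1: "1 < E" and q0: "0 < q"
    and X0: "0 \<le> X" and D0: "0 \<le> D" and i: "D \<le> X * (E - 1)"
    and ii: "A * (X + D) + (d - phi) * D \<le> A * d"
    and psi: "1 / q < 1 / (E - 1) + (d - phi) / A"
  shows "D < d * q / (1 + q)"
proof -
  define K where "K = 1 + (d - phi) / A"
  have K1: "1 \<le> K" using phd A0 by (simp add: K_def)
  have Xle: "X \<le> d - K * D"
  proof -
    have "A * X \<le> A * d - A * D - (d - phi) * D" using ii by (simp add: algebra_simps)
    then have "X \<le> (A * d - A * D - (d - phi) * D) / A" using A0 by (simp add: field_simps)
    also have "\<dots> = d - K * D" using A0 by (simp add: K_def field_simps)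
    finally show ?thesis .
  qed
  have "D \<le> (d - K * D) * (E - 1)"
    using i Xle E1 by (smt (verit) mult_right_mono)
  then have DW: "D * (1 + K * (E - 1)) \<le> d * (E - 1)" by (simp add: algebra_simps)
  define W where "W = 1 + K * (E - 1)"
  have W0: "0 < W" using K1 E1 by (simp add: W_def add_pos_nonneg)
  have d0: "0 < d" using ph phd by simp
  have "(E - 1) < q * (1 + (K - 1) * (E - 1))"
  proof -
    define c where "c = (d - phi) / A"
    have Kc: "K - 1 = c" by (simp add: K_def c_def)
    have "1 / q * (q * (E - 1)) < (1 / (E - 1) + c) * (q * (E - 1))"
      using psi q0 E1 unfolding c_def by (intro mult_strict_right_mono) auto
    moreover have "1 / q * (q * (E - 1)) = E - 1" using q0 by simp
    moreover have "(1 / (E - 1) + c) * (q * (E - 1)) = q + c * q * (E - 1)"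
    proof -
      define r where "r = 1 / (E - 1)"
      have r1: "r * (E - 1) = 1" using E1 by (simp add: r_def)
      have "(r + c) * (q * (E - 1)) = (r * (E - 1)) * q + c * q * (E - 1)" by (simp add: algebra_simps)
      then show ?thesis using r1 by (simp add: r_def)
    qed
    ultimately show ?thesis unfolding Kc by (simp add: algebra_simps)
  qed
  then have key: "(E - 1) * (1 + q) < q * W" by (simp add: W_def algebra_simps)
  have "D * W * (1 + q) \<le> d * (E - 1) * (1 + q)"
    using DW q0 by (simp add: W_def mult_right_mono)
  also have "\<dots> < d * (q * W)" using key d0 by (simp add: mult.assoc)
  finally have "D * (1 + q) * W < (d * q) * W" by (simp add: algebra_simps)
  then have "D * (1 + q) < d * q" using W0 by simp
  then show ?thesis using q0 by (simp add: field_simps)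
qed


lemma rc_transfer:
  fixes f g :: "real \<Rightarrow> real"
  assumes "\<forall>\<^sub>F z in at_right x. g z = f z" "f x = g x" "continuous (at_right x) g"
  shows "continuous (at_right x) f"
  using assms unfolding continuous_within
  by (auto intro: Lim_transform_eventually)

locale setting =
  fixes lo hi p mu :: real and F :: "real \<Rightarrow> real"
  assumes lo0: "0 \<le> lo" and lohi: "lo < hi" and p0: "0 < p" and p1: "p < 1"
    and Fdef: "F = (\<lambda>x. if x < lo then 0 else if x < hi then p else 1)"
    and mudef: "mu = cdf_mean F"
begin

lemma F_cdf: "cdf_on lo hi F"
  unfolding cdf_on_def
proof (intro conjI allI impI)
  show "mono F" unfolding Fdef mono_def using p0 p1 by auto
  fix x
  show "continuous (at_right x) F"
  proof (cases "x < lo")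
    case True
    show ?thesis
    proof (rule rc_transfer[where g="\<lambda>_. 0"])
      show "\<forall>\<^sub>F z in at_right x. 0 = F z"
        using eventually_at_right_field[of _ x] True unfolding Fdef
        by (auto intro!: exI[of _ lo])
    qed (use True Fdef in auto)
  next
    case False
    show ?thesis
    proof (cases "x < hi")
      case True
      show ?thesis
      proof (rule rc_transfer[where g="\<lambda>_. p"])
        show "\<forall>\<^sub>F z in at_right x. p = F z"
          using eventually_at_right_field[of _ x] True False unfolding Fdef
          by (auto intro!: exI[of _ hi])
      qed (use True False Fdef in auto)
    next
      case F2: False
      show ?thesis
      proof (rule rc_transfer[where g="\<lambda>_. 1"])
        show "\<forall>\<^sub>F z in at_right x. 1 = F z"
          using eventually_at_right_field[of _ x] F2 False unfolding Fdef
          by (auto intro!: exI[of _ "x+1"])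
      qed (use F2 False Fdef lohi in auto)
    qed
  qed
qed (use lohi in \<open>auto simp: Fdef\<close>)

sublocale Fl: cdfl lo hi F
  using F_cdf lohi by unfold_locales

lemma HF: "lo \<le> x \<Longrightarrow> x \<le> hi \<Longrightarrow> integral {lo..x} F = p * (x - lo)"
proof -
  assume x: "lo \<le> x" "x \<le> hi"
  have "integral {lo..x} F = integral {lo..x} (\<lambda>_. p)"
    by (rule integral_spike[of "{hi}"]) (use x in \<open>auto simp: Fdef\<close>)
  then show ?thesis using x by simp
qed

lemma mu_eq: "mu = hi - p * (hi - lo)"
  using Fl.mean HF[of hi] lohi mudef by (simp add: cdf_mean_def)

definition "d = hi - mu"
definition "A = mu - lo"
definition "a = exp ((lo - mu) / (hi - mu))"

lemma d_eq: "d = p * (hi - lo)" and A_eq: "A = (1 - p) * (hi - lo)"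
  using mu_eq by (auto simp: d_def A_def algebra_simps)
lemma d_pos: "0 < d" and A_pos: "0 < A"
  using d_eq A_eq p0 p1 lohi by auto
lemma a_eq: "a = exp (- A / d)"
  by (simp add: a_def A_def d_def)
lemma a_pos: "0 < a" by (simp add: a_def)
lemma a_lt1: "a < 1" using a_eq d_pos A_pos by simp
lemma Ad: "A / d = (1 - p) / p"
proof -
  have "A / d = ((1 - p) * (hi - lo)) / (p * (hi - lo))" by (simp add: d_eq A_eq)
  also have "\<dots> = (1 - p) / p" using lohi by simp
  finally show ?thesis .
qed
lemma a_lt_p: "a < p"
proof -
  have x0: "0 < (1 - p) / p" using p0 p1 by simp
  have "1 + (1 - p) / p < exp ((1 - p) / p)"
    using exp_lower_Taylor_quadratic[of "(1 - p) / p"] x0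
    by (smt (verit) zero_less_power divide_pos_pos)
  moreover have "1 + (1 - p) / p = 1 / p" using p0 by (simp add: field_simps)
  ultimately have "1 / p < exp ((1 - p) / p)" by simp
  then have "exp (- ((1 - p) / p)) < p"
    using p0 by (simp add: exp_minus field_simps)
  then show ?thesis using a_eq Ad by simp
qed


abbreviation "Gs \<equiv> Gstar lo hi mu"

lemma lod_le_hi: "lo + d \<le> hi" using A_pos by (simp add: A_def d_def)
lemma exp_lod: "exp ((lo + d - hi) / d) = a" by (simp add: a_def d_def)

lemma Gs_alt: "Gs s = (if s < lo then 0 else min 1 (max a (exp ((s - hi) / d))))"
proof -
  have e1: "lo + hi - mu = lo + d" by (simp add: d_def)
  have e2: "(lo - mu) / (hi - mu) = (lo + d - hi) / d" by (simp add: d_def)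
  consider "s < lo" | "lo \<le> s" "s < lo + d" | "lo + d \<le> s" "s \<le> hi" | "hi < s" by linarith
  then show ?thesis
  proof cases
    case 1 then show ?thesis by (simp add: Gstar_def)
  next
    case 2
    have "exp ((s - hi) / d) \<le> a"
      unfolding exp_lod[symmetric] using 2 d_pos by (simp add: divide_right_mono)
    then show ?thesis using 2 a_lt1 by (simp add: Gstar_def e1 a_def)
  next
    case 3
    have "a \<le> exp ((s - hi) / d)"
      unfolding exp_lod[symmetric] using 3 d_pos by (simp add: divide_right_mono)
    moreover have "exp ((s - hi) / d) \<le> 1" using 3 d_pos by (simp add: divide_nonpos_pos)
    ultimately show ?thesis using 3 lod_le_hi by (simp add: Gstar_def e1 d_def)
  next
    case 4
    have e: "1 < exp ((s - hi) / d)" using 4 d_pos by simp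
    have "max a (exp ((s - hi) / d)) = exp ((s - hi) / d)" using e a_lt1 by (intro max_absorb2) linarith
    moreover have "min 1 (exp ((s - hi) / d)) = 1" using e by (intro min_absorb1) linarith
    ultimately show ?thesis using 4 lohi lod_le_hi a_lt1 by (simp add: Gstar_def e1)
  qed
qed

lemma Gs_cdf: "cdf_on lo hi Gs"
  unfolding cdf_on_def
proof (intro conjI allI impI)
  show "mono Gs"
  proof (rule monoI)
    fix x y :: real assume xy: "x \<le> y"
    have "exp ((x - hi) / d) \<le> exp ((y - hi) / d)" using xy d_pos by (simp add: divide_right_mono)
    then have "min 1 (max a (exp ((x - hi) / d))) \<le> min 1 (max a (exp ((y - hi) / d)))"
      by (intro min.mono max.mono) auto
    moreover have "0 \<le> min 1 (max a (exp ((y - hi) / d)))" using a_pos by simp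
    ultimately show "Gs x \<le> Gs y" using xy unfolding Gs_alt by auto
  qed
  fix x
  show "continuous (at_right x) Gs"
  proof (cases "x < lo")
    case True
    show ?thesis
    proof (rule rc_transfer[where g="\<lambda>_. 0"])
      show "\<forall>\<^sub>F z in at_right x. 0 = Gs z"
        using eventually_at_right_field[of _ x] True unfolding Gs_alt
        by (auto intro!: exI[of _ lo])
    qed (use True Gs_alt in auto)
  next
    case False
    show ?thesis
    proof (rule rc_transfer[where g="\<lambda>s. min 1 (max a (exp ((s - hi) / d)))"])
      show "\<forall>\<^sub>F z in at_right x. min 1 (max a (exp ((z - hi) / d))) = Gs z"
        using eventually_at_right_field[of _ x] False unfolding Gs_alt
        by (auto intro!: exI[of _ "x + 1"])
      show "continuous (at_right x) (\<lambda>s. min 1 (max a (exp ((s - hi) / d))))"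
        by (intro continuous_intros) (use d_pos in auto)
    qed (use False Gs_alt in auto)
  qed
next
  fix x :: real assume "x < lo" then show "Gs x = 0" by (simp add: Gs_alt)
next
  fix x :: real assume "hi \<le> x"
  then have e: "1 \<le> exp ((x - hi) / d)" using d_pos by simp
  have "max a (exp ((x - hi) / d)) = exp ((x - hi) / d)" using e a_lt1 by (intro max_absorb2) linarith
  moreover have "min 1 (exp ((x - hi) / d)) = 1" using e by (intro min_absorb1) linarith
  ultimately show "Gs x = 1" using \<open>hi \<le> x\<close> lohi by (simp add: Gs_alt)
qed

sublocale Gl: cdfl lo hi Gs
  using Gs_cdf lohi by unfold_locales

lemma Gs_const: "lo \<le> s \<Longrightarrow> s \<le> lo + d \<Longrightarrow> Gs s = a"
proof -
  assume s: "lo \<le> s" "s \<le> lo + d"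
  have "exp ((s - hi) / d) \<le> a"
    unfolding exp_lod[symmetric] using s d_pos by (simp add: divide_right_mono)
  then show ?thesis using s a_lt1 by (simp add: Gs_alt)
qed

lemma Gs_exp: "lo + d \<le> s \<Longrightarrow> s \<le> hi \<Longrightarrow> Gs s = exp ((s - hi) / d)"
proof -
  assume s: "lo + d \<le> s" "s \<le> hi"
  have "a \<le> exp ((s - hi) / d)"
    unfolding exp_lod[symmetric] using s d_pos by (simp add: divide_right_mono)
  moreover have "exp ((s - hi) / d) \<le> 1" using s d_pos by (simp add: divide_nonpos_pos)
  ultimately show ?thesis using s d_pos by (simp add: Gs_alt)
qed

lemma HGs1: "lo \<le> x \<Longrightarrow> x \<le> lo + d \<Longrightarrow> integral {lo..x} Gs = a * (x - lo)"
proof -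
  assume x: "lo \<le> x" "x \<le> lo + d"
  have "integral {lo..x} Gs = integral {lo..x} (\<lambda>_. a)"
    by (rule integral_cong) (use x Gs_const in auto)
  then show ?thesis using x by simp
qed

lemma HGs2: "lo + d \<le> x \<Longrightarrow> x \<le> hi \<Longrightarrow> integral {lo..x} Gs = d * exp ((x - hi) / d)"
proof -
  assume x: "lo + d \<le> x" "x \<le> hi"
  have "integral {lo + d..x} Gs = integral {lo + d..x} (\<lambda>s. exp ((s - hi) / d))"
    by (rule integral_cong) (use x Gs_exp in auto)
  also have "\<dots> = d * exp ((x - hi) / d) - d * exp ((lo + d - hi) / d)"
  proof (rule integral_unique, rule fundamental_theorem_of_calculus)
    show "lo + d \<le> x" by (rule x)
    fix s assume "s \<in> {lo + d..x}"
    have dn: "d \<noteq> 0" using d_pos by simp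
    have "((\<lambda>s. d * exp ((s - hi) / d)) has_real_derivative d * (exp ((s - hi) / d) * (1 / d))) (at s within {lo + d..x})"
      apply (rule derivative_eq_intros refl dn)+
      apply (simp add: field_simps)
      done
    then show "((\<lambda>s. d * exp ((s - hi) / d)) has_vector_derivative exp ((s - hi) / d)) (at s within {lo + d..x})"
      using d_pos by (simp add: has_real_derivative_iff_has_vector_derivative)
  qed
  finally have "integral {lo + d..x} Gs = d * exp ((x - hi) / d) - d * a" by (simp add: exp_lod)
  moreover have "integral {lo..x} Gs = integral {lo..lo+d} Gs + integral {lo + d..x} Gs"
    using Gl.int_split[of lo "lo + d" x] x d_pos by simp
  moreover have "integral {lo..lo+d} Gs = a * d" using HGs1[of "lo + d"] d_pos by simp
  ultimately show ?thesis by (simp add: algebra_simps)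
qed

end


context setting begin

lemma HGs_hi: "integral {lo..hi} Gs = d"
  using HGs2[of hi] lod_le_hi by simp
lemma HF_hi: "integral {lo..hi} F = d"
  using HF[of hi] lohi d_eq by simp

lemma convex_part:
  assumes x: "lo + d \<le> x" "x \<le> hi"
  shows "d * exp ((x - hi) / d) \<le> p * (x - lo)"
proof -
  define t where "t = (hi - x) / A"
  have t: "0 \<le> t" "t \<le> 1" using x A_pos unfolding t_def by (auto simp: A_def d_def field_simps)
  have eq: "(x - hi) / d = (1 - t) *\<^sub>R 0 + t *\<^sub>R (- A / d)"
    using A_pos d_pos by (simp add: t_def field_simps)
  have "exp ((x - hi) / d) \<le> (1 - t) * exp 0 + t * exp (- A / d)"
    unfolding eq by (rule convex_onD[OF exp_convex]) (use t in auto)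
  also have "\<dots> = 1 - t + t * a" by (simp add: a_eq)
  also have "\<dots> \<le> 1 - t + t * p" using t a_lt_p by (simp add: mult_left_mono)
  finally have "d * exp ((x - hi) / d) \<le> d * (1 - t + t * p)" using d_pos by simp
  also have "d * (1 - t + t * p) = p * (x - lo)"
  proof -
    have "t * d * (1 - p) = p * (hi - x)"
      using A_pos lohi p0 p1 unfolding t_def A_eq d_eq by (simp add: field_simps)
    have "d * (1 - t + t * p) = d - t * d * (1 - p)" by (simp add: algebra_simps)
    also have "\<dots> = d - p * (hi - x)" using \<open>t * d * (1 - p) = p * (hi - x)\<close> by simp
    also have "\<dots> = p * (x - lo)" using d_eq by (simp add: algebra_simps)
    finally show ?thesis .
  qed
  finally show ?thesis .
qed

lemma Gs_Gamma: "Gamma lo hi F Gs"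
  unfolding Gamma_def
proof (intro conjI allI)
  show "cdf_on lo hi Gs" by (rule Gs_cdf)
  show "integral {lo..hi} Gs = integral {lo..hi} F" using HGs_hi HF_hi by simp
  fix x
  consider "x < lo" | "lo \<le> x" "x \<le> lo + d" | "lo + d \<le> x" "x \<le> hi" | "hi \<le> x" by linarith
  then show "integral {lo..x} Gs \<le> integral {lo..x} F"
  proof cases
    case 1 then show ?thesis by simp
  next
    case 2
    then show ?thesis using HGs1 HF[of x] lod_le_hi a_lt_p
      by (simp add: mult_right_mono)
  next
    case 3
    then show ?thesis using HGs2[OF 3] HF[of x] convex_part[OF 3] d_pos by simp
  next
    case 4
    then show ?thesis using Gl.H_above[OF 4] Fl.H_above[OF 4] HGs_hi HF_hi by simp
  qed
qed

lemma Gs_wP: "wP hi mu Gs 0 d"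
  unfolding wP_def by (simp add: d_def set_lebesgue_integral_def)

lemma cond_exp_Gs: "lo \<le> t \<Longrightarrow> cond_exp_below Gs t = (t * Gs t - integral {lo..t} Gs) / Gs t"
  unfolding cond_exp_below_def using Gl.lint_Iic by simp

lemma Gs_wHE: "wHE Gs d (lo + d)"
  unfolding wHE_def
proof (intro conjI allI impI)
  show "0 < Gs (lo + d)" using Gs_const[of "lo + d"] d_pos a_pos by simp
  show "lo + d - d = cond_exp_below Gs (lo + d)"
    using cond_exp_Gs[of "lo + d"] Gs_const[of "lo + d"] HGs1[of "lo + d"] d_pos a_pos
    by (simp add: field_simps)
  fix t' assume t': "lo + d < t'"
  have pos: "0 < Gs t'" using Gl.monoG[of "lo + d" t'] t' Gs_const[of "lo + d"] d_pos a_pos by simp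
  have key: "d * Gs t' \<le> integral {lo..t'} Gs"
  proof (cases "t' \<le> hi")
    case True
    then show ?thesis using HGs2[of t'] Gs_exp[of t'] t' by simp
  next
    case False
    then show ?thesis using Gl.H_above[of t'] HGs_hi Gl.G_above[of t'] by simp
  qed
  have "cond_exp_below Gs t' = (t' * Gs t' - integral {lo..t'} Gs) / Gs t'"
    using cond_exp_Gs[of t'] t' d_pos by simp
  also have "\<dots> \<le> (t' * Gs t' - d * Gs t') / Gs t'"
    using key pos by (simp add: divide_right_mono)
  also have "\<dots> = t' - d" using pos by (simp add: field_simps)
  finally show "cond_exp_below Gs t' \<le> t' - d" .
qed

lemma Gs_feasible: "feasible lo hi mu F Gs 0 d (lo + d)"
  unfolding feasible_def using Gs_Gamma Gs_wP Gs_wHE by simp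

lemma Gs_Rhat: "Rhat Gs 0 d (lo + d) = d * (1 - a)"
  unfolding Rhat_def using Gs_const[of "lo + d"] d_pos by simp

end


context setting begin

lemma char_G:
  assumes cdfG: "cdf_on lo hi G"
    and Hhi: "integral {lo..hi} G = d"
    and Gt: "G (lo + d) = a"
    and Ht: "integral {lo..lo + d} G = d * a"
    and le: "\<And>y. lo + d \<le> y \<Longrightarrow> y \<le> hi \<Longrightarrow> d * G y \<le> integral {lo..y} G"
  shows "G = Gs"
proof -
  interpret Gc: cdfl lo hi G using cdfG lohi by unfold_locales
  define t where "t = lo + d"
  have t: "lo < t" "t \<le> hi" using d_pos lod_le_hi by (auto simp: t_def)
  have hit: "hi - t = A" by (simp add: t_def A_def d_def)
  show ?thesis
  proof
    fix x
    consider "x < lo" | "lo \<le> x" "x < t" | "t \<le> x" "x < hi" | "hi \<le> x" by linarith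
    then show "G x = Gs x"
    proof cases
      case 1 then show ?thesis using Gc.G_below Gl.G_below by simp
    next
      case 4 then show ?thesis using Gc.G_above Gl.G_above by simp
    next
      case 2
      have "G x = a"
      proof (rule ccontr)
        assume ne: "G x \<noteq> a"
        have "G x \<le> a" using Gc.monoG[of x t] 2 Gt by (simp add: t_def)
        with ne have lt: "G x < a" by simp
        have "((\<lambda>z. G z) \<longlongrightarrow> G x) (at_right x)"
          using Gc.rc[of x] by (simp add: continuous_within)
        then have "\<forall>\<^sub>F z in at_right x. G z < a" using lt by (rule order_tendstoD)
        moreover have "\<forall>\<^sub>F z in at_right x. z < t"
          using 2 by (auto simp: eventually_at_right_field intro!: exI[of _ t])
        ultimately have "\<forall>\<^sub>F z in at_right x. G z < a \<and> z < t" by (rule eventually_conj)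
        moreover have "\<forall>\<^sub>F z in at_right x. x < z" by (simp add: eventually_at_right_less)
        ultimately have "\<forall>\<^sub>F z in at_right x. G z < a \<and> z < t \<and> x < z" by (rule eventually_conj[THEN eventually_mono]) auto
        then obtain z where z: "G z < a" "z < t" "x < z"
          using eventually_happens' [of "at_right x"] by auto
        have "integral {lo..t} G = integral {lo..z} G + integral {z..t} G"
          using Gc.int_split[of lo z t] z 2 by simp
        also have "\<dots> \<le> (z - lo) * G z + (t - z) * G t"
          using Gc.int_upper[of lo z] Gc.int_upper[of z t] z 2 by simp
        also have "\<dots> < (z - lo) * a + (t - z) * a"
          using z 2 Gt by (simp add: t_def mult_strict_left_mono)
        also have "\<dots> = d * a" by (simp add: t_def algebra_simps)
        finally show False using Ht by (simp add: t_def)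
      qed
      then show ?thesis using Gs_const[of x] 2 by (simp add: t_def)
    next
      case 3
      define k where "k y = integral {lo..y} G * exp (- (y - t) / d)" for y
      have anti: "k y \<le> k x'" if "t \<le> x'" "x' \<le> y" "y \<le> hi" for x' y
        unfolding k_def
        by (rule Gc.k_antimono[where b=hi]) (use that t d_pos le in \<open>auto simp: t_def\<close>)
      have kt: "k t = d * a" using Ht by (simp add: k_def t_def)
      have khi: "k hi = d * a" using Hhi hit by (simp add: k_def a_eq)
      have Hy: "integral {lo..y} G = d * exp ((y - hi) / d)" if "t \<le> y" "y \<le> hi" for y
      proof -
        have "k y = d * a" using anti[of t y] anti[of y hi] that kt khi by simp
        have e: "exp (- (y - t) / d) * exp ((y - t) / d) = 1"
        proof -
          have "exp (- (y - t) / d) * exp ((y - t) / d) = exp (- (y - t) / d + (y - t) / d)"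
            by (rule exp_add[symmetric])
          also have "\<dots> = 1" by (simp add: add_divide_distrib[symmetric])
          finally show ?thesis .
        qed
        have "integral {lo..y} G = integral {lo..y} G * (exp (- (y - t) / d) * exp ((y - t) / d))"
          using e by simp
        also have "\<dots> = k y * exp ((y - t) / d)" by (simp add: k_def)
        also have "\<dots> = d * a * exp ((y - t) / d)" using \<open>k y = d * a\<close> by simp
        finally have "integral {lo..y} G = d * a * exp ((y - t) / d)" .
        also have "\<dots> = d * exp ((y - hi) / d)"
        proof -
          have "a * exp ((y - t) / d) = exp (- A / d + (y - t) / d)" unfolding a_eq by (rule exp_add[symmetric])
          also have "- A / d + (y - t) / d = (- A + (y - t)) / d" by (rule add_divide_distrib[symmetric])
          also have "- A + (y - t) = y - hi" using hit by linarith
          finally show ?thesis by (simp add: mult.assoc)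
        qed
        finally show ?thesis .
      qed
      have d1: "((\<lambda>u. integral {lo..u} G) has_real_derivative G x) (at x within {x..hi})"
        by (rule Gc.H_rderiv) (use 3 t in auto)
      have d2: "((\<lambda>u. integral {lo..u} G) has_real_derivative exp ((x - hi) / d)) (at x within {x..hi})"
      proof (rule has_field_derivative_transform_within[where d=1])
        have dn: "d \<noteq> 0" using d_pos by simp
        have "((\<lambda>u. d * exp ((u - hi) / d)) has_real_derivative d * (exp ((x - hi) / d) * (1 / d))) (at x within {x..hi})"
          apply (rule derivative_eq_intros refl dn)+
          apply (simp add: field_simps)
          done
        then show "((\<lambda>u. d * exp ((u - hi) / d)) has_real_derivative exp ((x - hi) / d)) (at x within {x..hi})"
          using d_pos by simp
        fix u assume "u \<in> {x..hi}"
        then show "d * exp ((u - hi) / d) = integral {lo..u} G" using Hy[of u] 3 by simp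
      qed (use 3 in auto)
      have "at x within {x..hi} \<noteq> bot"
        using at_within_Icc_at_right[of x hi] 3 trivial_limit_at_right_real by simp
      then have "G x = exp ((x - hi) / d)" using has_field_derivative_unique[OF d1 d2] by simp
      then show ?thesis using Gs_exp[of x] 3 by (simp add: t_def)
    qed
  qed
qed

end


context setting begin

lemma Rstar_pos: "0 < d * (1 - a)" using d_pos a_lt1 by simp

lemma pA_lt: "p * A < d * (1 - a)"
proof -
  have "d * (1 - a) - p * A = p * (hi - lo) * (p - a)"
    unfolding d_eq A_eq by (simp add: algebra_simps)
  moreover have "0 < p * (hi - lo) * (p - a)" using p0 lohi a_lt_p by simp
  ultimately show ?thesis by linarith
qed

lemma bound:
  assumes fe: "feasible lo hi mu F G t phi tau"
  shows "Rhat G t phi tau \<le> d * (1 - a) \<and> (d * (1 - a) \<le> Rhat G t phi tau \<longrightarrow> G = Gs \<and> t = 0 \<and> phi = d)"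
proof -
  have Gam: "Gamma lo hi F G" and wp: "wP hi mu G t phi" and he: "wHE G phi tau"
    using fe by (auto simp: feasible_def)
  have cdfG: "cdf_on lo hi G" using Gam by (simp add: Gamma_def)
  interpret Gc: cdfl lo hi G using cdfG lohi by unfold_locales
  have Hhi: "integral {lo..hi} G = d" using Gam HF_hi by (simp add: Gamma_def)
  have HleF: "integral {lo..x} G \<le> integral {lo..x} F" for x using Gam by (simp add: Gamma_def)
  have gpos: "0 < G tau" and eqt: "tau - phi = cond_exp_below G tau"
    and geq: "\<And>t'. tau < t' \<Longrightarrow> t' - phi \<ge> cond_exp_below G t'"
    using he by (auto simp: wHE_def)
  have tlo: "lo \<le> tau"
  proof (rule ccontr)
    assume "\<not> lo \<le> tau" then have "G tau = 0" using Gc.G_below by simp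
    then show False using gpos by simp
  qed
  have ce: "cond_exp_below G y = (y * G y - integral {lo..y} G) / G y" if "lo \<le> y" for y
    unfolding cond_exp_below_def using Gc.lint_Iic[OF that] by simp
  have Htau: "integral {lo..tau} G = phi * G tau"
    using eqt ce[OF tlo] gpos by (simp add: field_simps)
  have Hge: "phi * G y \<le> integral {lo..y} G" if "tau < y" for y
  proof -
    have gy: "0 < G y" using Gc.monoG[of tau y] that gpos by simp
    have "(y * G y - integral {lo..y} G) / G y \<le> y - phi"
      using geq[OF that] ce[of y] that tlo by simp
    then have "y * G y - integral {lo..y} G \<le> (y - phi) * G y"
      using gy by (simp add: divide_le_eq)
    then show ?thesis by (simp add: algebra_simps)
  qed
  have Rdef: "Rhat G t phi tau = t + phi * (1 - G tau)" by (simp add: Rhat_def)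
  show ?thesis
  proof (cases "hi \<le> tau")
    case True
    have g1: "G tau = 1" using Gc.G_above[OF True] .
    have "integral {lo..tau} G = d + (tau - hi)" using Gc.H_above[OF True] Hhi by simp
    then have phid: "phi = d + (tau - hi)" using Htau g1 by simp
    have "{mu + phi<..hi} = {}" using phid True by (auto simp: d_def)
    then have "t \<le> 0" using wp by (simp add: wP_def set_lebesgue_integral_def)
    then have "Rhat G t phi tau \<le> 0" using Rdef g1 by simp
    then show ?thesis using Rstar_pos by linarith
  next
    case False
    then have thi: "tau < hi" by simp
    have "cond_exp_below G hi \<le> hi - phi" using geq[OF thi] by simp
    moreover have "cond_exp_below G hi = hi - d"
      using ce[of hi] lohi Hhi Gc.G_above[of hi] by simp
    ultimately have phi_le_d: "phi \<le> d" by simp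
    have phi0: "0 \<le> phi"
      using Htau Gc.int_nonneg[of lo tau] gpos by (simp add: zero_le_mult_iff)
    have "phi * G tau \<le> (tau - lo) * G tau" using Htau Gc.int_upper[OF tlo] by simp
    then have phi_le: "phi \<le> tau - lo" using gpos by simp
    define c where "c = mu + phi"
    have c: "lo \<le> c" "c \<le> hi" using A_pos phi0 phi_le_d by (auto simp: c_def A_def d_def)
    have "t \<le> (LINT s:{c<..hi}|interval_measure G. s - c)" using wp by (simp add: wP_def c_def)
    also have "\<dots> = hi - c - integral {lo..hi} G + integral {lo..c} G" by (rule Gc.lint_wP[OF c])
    also have "\<dots> = integral {lo..c} G - phi" using Hhi by (simp add: c_def d_def)
    finally have t_le: "t \<le> integral {lo..c} G - phi" .
    have R_le: "Rhat G t phi tau \<le> integral {lo..c} G - integral {lo..tau} G"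
      using Rdef t_le Htau by (simp add: algebra_simps)
    have Hc_le: "integral {lo..c} G \<le> d"
      using Gc.int_split[of lo c hi] c Gc.int_nonneg[of c hi] Hhi by simp
    show ?thesis
    proof (cases "phi = 0")
      case True
      have "integral {lo..c} G \<le> integral {lo..c} F" by (rule HleF)
      also have "\<dots> = p * A" using HF[OF c] True by (simp add: c_def A_def)
      finally have "Rhat G t phi tau \<le> p * A" using R_le Htau True by simp
      then show ?thesis using pA_lt by linarith
    next
      case False
      then have phipos: "0 < phi" using phi0 by simp
      have Hge': "phi * G y \<le> integral {lo..y} G" if "tau \<le> y" "y \<le> hi" for y
        using Hge[of y] that Htau by (cases "tau = y") auto
      show ?thesis
      proof (cases "c < tau")
        case True
        have "integral {lo..c} G \<le> integral {lo..tau} G"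
          using Gc.int_split[of lo c tau] c True Gc.int_nonneg[of c tau] by simp
        then have "Rhat G t phi tau \<le> 0" using R_le by simp
        then show ?thesis using Rstar_pos by linarith
      next
        case False
        then have ctau: "tau \<le> c" by simp
        have kc: "integral {lo..c} G * exp (- (c - tau) / phi) \<le> integral {lo..tau} G * exp (- (tau - tau) / phi)"
          by (rule Gc.k_antimono[where b=hi]) (use tlo phipos Hge' ctau c in auto)
        define X where "X = integral {lo..tau} G"
        define e1 where "e1 = exp ((c - tau) / phi)"
        define E where "E = exp (A / phi)"
        have X0: "0 \<le> X" unfolding X_def by (rule Gc.int_nonneg)
        have e1E: "e1 \<le> E" unfolding e1_def E_def using phipos phi_le c
          by (simp add: divide_right_mono c_def A_def)
        have e1ge: "1 \<le> e1" unfolding e1_def using ctau phipos by simp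
        have Hc: "integral {lo..c} G \<le> X * e1"
        proof -
          have "exp (- (c - tau) / phi) * e1 = 1"
            unfolding e1_def by (simp add: exp_add[symmetric] add_divide_distrib[symmetric])
          then have "integral {lo..c} G = integral {lo..c} G * exp (- (c - tau) / phi) * e1" by simp
          also have "\<dots> \<le> X * e1" using kc e1ge by (simp add: X_def mult_right_mono)
          finally show ?thesis .
        qed
        have R1: "Rhat G t phi tau \<le> X * (e1 - 1)" using R_le Hc by (simp add: X_def algebra_simps)
        have R2: "Rhat G t phi tau \<le> d - X" using R_le Hc_le by (simp add: X_def)
        have Epos: "0 < E" by (simp add: E_def)
        have E1: "1 \<le> E" using e1ge e1E by simp
        define D where "D = integral {lo..c} G - X"
        have RD: "Rhat G t phi tau \<le> D" using R_le by (simp add: D_def X_def)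
        have D0: "0 \<le> D"
          using Gc.int_split[of lo tau c] tlo ctau Gc.int_nonneg[of tau c] by (simp add: D_def X_def)
        have Di: "D \<le> X * (E - 1)"
        proof -
          have "D \<le> X * (e1 - 1)" using Hc by (simp add: D_def algebra_simps)
          also have "\<dots> \<le> X * (E - 1)" using e1E X0 by (simp add: mult_left_mono)
          finally show ?thesis .
        qed
        have Dii: "A * (X + D) + (d - phi) * D \<le> A * d"
        proof -
          have Dint: "D = integral {tau..c} G"
            using Gc.int_split[of lo tau c] tlo ctau by (simp add: D_def X_def)
          have "D \<le> (c - tau) * G c" unfolding Dint by (rule Gc.int_upper[OF ctau])
          also have "\<dots> \<le> A * G c"
            using Gc.G_nonneg[of c] phi_le by (intro mult_right_mono) (auto simp: c_def A_def)
          finally have DA: "D \<le> A * G c" .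
          have "(hi - c) * G c \<le> integral {c..hi} G" by (rule Gc.int_lower[OF c(2)])
          also have "integral {c..hi} G = d - (X + D)"
            using Gc.int_split[of lo c hi] c Hhi by (simp add: D_def)
          moreover have "hi - c = d - phi" by (simp add: c_def d_def)
          ultimately have hc: "(d - phi) * G c \<le> d - (X + D)" by simp
          have "(d - phi) * D \<le> (d - phi) * (A * G c)"
            using DA phi_le_d by (simp add: mult_left_mono)
          also have "\<dots> = A * ((d - phi) * G c)" by simp
          also have "\<dots> \<le> A * (d - (X + D))" using hc A_pos by (simp add: mult_left_mono)
          finally show ?thesis by (simp add: algebra_simps)
        qed
        show ?thesis
        proof (cases "phi = d")
          case False
          then have phd: "phi < d" using phi_le_d by simp
          define q where "q = exp (A / d) - 1"
          have q0: "0 < q" using A_pos d_pos by (simp add: q_def)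
          have EE1: "1 < E" using A_pos phipos by (simp add: E_def)
          have psi: "1 / q < 1 / (E - 1) + (d - phi) / A"
          proof -
            have "A / d < A / phi" using A_pos phipos phd by (simp add: frac_less2)
            from psi_dec[OF _ this] have "1 / (A / phi) - 1 / (E - 1) < 1 / (A / d) - 1 / q"
              using A_pos d_pos by (simp add: E_def q_def)
            moreover have "1 / (A / d) - 1 / (A / phi) = (d - phi) / A"
              using A_pos by (simp add: field_simps)
            ultimately show ?thesis by linarith
          qed
          have "D < d * q / (1 + q)" by (rule alg[OF A_pos phipos phd EE1 q0 X0 D0 Di Dii psi])
          also have "d * q / (1 + q) = d * (1 - a)"
          proof -
            have "a = 1 / (1 + q)" by (simp add: a_eq q_def exp_minus inverse_eq_divide)
            then have "1 - a = q / (1 + q)" using q0 by (simp add: field_simps)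
            then show ?thesis by simp
          qed
          finally have "Rhat G t phi tau < d * (1 - a)" using RD by simp
          then show ?thesis by simp
        next
          case True
          then have phid: "phi = d" .
          have R3: "Rhat G t phi tau \<le> d - d / E"
          proof (cases "X \<le> d / E")
            case True
            have "X * (e1 - 1) \<le> X * (E - 1)" using e1E X0 by (simp add: mult_left_mono)
            also have "\<dots> \<le> d / E * (E - 1)" by (rule mult_right_mono) (use True e1E e1ge in auto)
            also have "\<dots> = d - d / E" using Epos by (simp add: field_simps)
            finally show ?thesis using R1 by simp
          next
            case False then show ?thesis using R2 by simp
          qed
          have dE: "d / E = d * a" by (simp add: E_def a_eq phid exp_minus field_simps)
          have part1: "Rhat G t phi tau \<le> d * (1 - a)"
            using R3 dE by (simp add: algebra_simps)
          have part2: "G = Gs \<and> t = 0 \<and> phi = d" if ge: "d * (1 - a) \<le> Rhat G t phi tau"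
          proof -
            have E1: "1 \<le> E" using e1ge e1E by simp
            have chi: "c = hi" by (simp add: c_def phid d_def)
            have t0: "t \<le> 0" using t_le chi Hhi phid by simp
            have XE: "X = d * G tau" using Htau phid by (simp add: X_def)
            have Ea: "E * a = 1" unfolding E_def a_eq phid by (simp add: exp_add[symmetric])
            have Ea': "a * (E - 1) = 1 - a" using Ea by (simp add: algebra_simps)
            have ga: "G tau \<le> a"
            proof -
              have "X \<le> d - d * (1 - a)" using R2 ge by simp
              then show ?thesis using XE d_pos by (simp add: algebra_simps)
            qed
            have key: "1 - a \<le> G tau * (e1 - 1)"
            proof -
              have "d * (1 - a) \<le> d * (G tau * (e1 - 1))" using ge R1 XE by (simp add: mult.assoc)
              then show ?thesis using d_pos by simp
            qed
            have gEq: "G tau = a"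
            proof (rule ccontr)
              assume "G tau \<noteq> a"
              then have "G tau < a" using ga by simp
              have "G tau * (e1 - 1) \<le> G tau * (E - 1)" using e1E gpos by (simp add: mult_left_mono)
              also have "\<dots> < a * (E - 1)"
              proof -
                have "E \<noteq> 1"
                proof
                  assume "E = 1" then have "a = 1" using Ea by simp
                  then show False using a_lt1 by simp
                qed
                then show ?thesis using \<open>G tau < a\<close> E1 by (simp add: mult_strict_right_mono)
              qed
              finally show False using key Ea' by simp
            qed
            have e1Eq: "e1 = E"
            proof (rule ccontr)
              assume "e1 \<noteq> E"
              then have "e1 < E" using e1E by simp
              then have "a * (e1 - 1) < a * (E - 1)" using a_pos by simp
              then show False using key gEq Ea' by simp
            qed
            have "(c - tau) / phi = A / phi" using e1Eq unfolding e1_def E_def by simp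
            then have tauEq: "tau = lo + d" using phipos chi by (simp add: A_def d_def)
            have "t \<ge> 0" using ge Rdef gEq phid by simp
            then have "t = 0" using t0 by simp
            moreover have "G = Gs"
            proof (rule char_G[OF cdfG Hhi])
              show "G (lo + d) = a" using gEq tauEq by simp
              show "integral {lo..lo + d} G = d * a" using Htau gEq tauEq phid by simp
              fix y assume "lo + d \<le> y" "y \<le> hi"
              then show "d * G y \<le> integral {lo..y} G" using Hge'[of y] tauEq phid by simp
            qed
            ultimately show ?thesis using phid by simp
          qed
          show ?thesis using part1 part2 by blast
        qed
      qed
    qed
  qed
qed

end


theorem proposition3:
  fixes lo hi p mu :: real and F G :: "real \<Rightarrow> real" and phi_t phi_d :: real
  assumes "0 \<le> lo" and "lo < hi" and "0 < p" and "p < 1"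
    and "F = (\<lambda>x. if x < lo then 0 else if x < hi then p else 1)"
    and "mu = cdf_mean F"
  shows "robustly_optimal lo hi mu F G phi_t phi_d \<longleftrightarrow>
           (G = Gstar lo hi mu \<and> phi_t = 0 \<and> phi_d = hi - mu)"
proof -
  interpret S: setting lo hi p mu F using assms by unfold_locales
  show ?thesis
  proof
    assume "robustly_optimal lo hi mu F G phi_t phi_d"
    then obtain tau where fe: "feasible lo hi mu F G phi_t phi_d tau"
      and opt: "\<And>G' t' d' tau'. feasible lo hi mu F G' t' d' tau' \<Longrightarrow>
                  Rhat G' t' d' tau' \<le> Rhat G phi_t phi_d tau"
      unfolding robustly_optimal_def by blast
    have "Rhat (Gstar lo hi mu) 0 S.d (lo + S.d) \<le> Rhat G phi_t phi_d tau"
      by (rule opt[OF S.Gs_feasible])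
    then have "S.d * (1 - S.a) \<le> Rhat G phi_t phi_d tau" using S.Gs_Rhat by simp
    then have "G = Gstar lo hi mu \<and> phi_t = 0 \<and> phi_d = S.d" using S.bound[OF fe] by blast
    then show "G = Gstar lo hi mu \<and> phi_t = 0 \<and> phi_d = hi - mu" by (simp add: S.d_def)
  next
    assume h: "G = Gstar lo hi mu \<and> phi_t = 0 \<and> phi_d = hi - mu"
    then have h': "G = Gstar lo hi mu" "phi_t = 0" "phi_d = S.d" by (auto simp: S.d_def)
    show "robustly_optimal lo hi mu F G phi_t phi_d"
      unfolding robustly_optimal_def
    proof (intro exI conjI allI impI)
      show "feasible lo hi mu F G phi_t phi_d (lo + S.d)" using S.Gs_feasible h' by simp
      fix G' t' d' tau' assume "feasible lo hi mu F G' t' d' tau'"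
      then have "Rhat G' t' d' tau' \<le> S.d * (1 - S.a)" using S.bound by blast
      then show "Rhat G' t' d' tau' \<le> Rhat G phi_t phi_d (lo + S.d)" using S.Gs_Rhat h' by simp
    qed
  qed
qed

end
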